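(* Let $q$ be a prime power, $l\ge1$, $t=q^l$, and let $i$ be an integer with $1\le i<q-1$. Let $G_1(x)=x^{t-1}+1$, $G_2(x)=x^t+x$, and $L_1^*=\{\alpha\in GF(t^2):\ \alpha\neq0,\ G_1(\alpha)\ne0\}=\{\alpha_1,\dots,\alpha_{n}\}$. Let $H_1^{*(i)}$ be the $i(t-1)\times n$ matrix with entries $\alpha_k^s/G_1(\alpha_k)^i$ ($s=0,\dots,i(t-1)-1$, $k=1,\dots,n$). Then the matrix obtained by placing the row $\big(1/G_2(\alpha_1)^i,\dots,1/G_2(\alpha_n)^i\big)$ on top of $H_1^{*(i)}$ is a parity-check matrix of $\Gamma_2^{(i)}=\Gamma(L_1^*,G_2^i)$; that is, $\Gamma_2^{(i)}=\{c\in\Gamma_1^{*(i)}:\ \sum_{k}c_k/G_2(\alpha_k)^i=0\}$ where $\Gamma_1^{*(i)}=\Gamma(L_1^*,G_1^i)$, and the entries $1/G_2(\alpha_k)^i$ all lie in $GF(t)$.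
   Context: For a set $L=\{\alpha_1,\dots,\alpha_n\}$ of distinct elements of $GF(t^2)$ and $P\in GF(t^2)[x]$ with $P(\alpha_k)\neq0$ for all $k$, the $q$-ary Goppa code is $\Gamma(L,P)=\{c\in GF(q)^n:\ \sum_k c_k\alpha_k^s/P(\alpha_k)=0 \text{ for } s=0,\dots,\deg P-1\}$. A matrix $H$ over $GF(t^2)$ is a parity-check matrix of a $q$-ary code $C$ if $C=\{c\in GF(q)^n: cH^T=0\}$. *)

theory Defs
  imports "HOL-Computational_Algebra.Polynomial" "HOL-Computational_Algebra.Primes"
begin

definition subfield_GF :: "nat \<Rightarrow> 'a::field set" where
  "subfield_GF r = {x. x ^ r = x}"

definition words :: "nat \<Rightarrow> nat \<Rightarrow> (nat \<Rightarrow> 'a::field) set" where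
  "words q n = {c. (\<forall>k<n. c k \<in> subfield_GF q) \<and> (\<forall>k\<ge>n. c k = 0)}"

definition goppa_code :: "nat \<Rightarrow> (nat \<Rightarrow> 'a::field) \<Rightarrow> nat \<Rightarrow> 'a poly \<Rightarrow> (nat \<Rightarrow> 'a) set" where
  "goppa_code q alpha n P = {c \<in> words q n.
     \<forall>s<degree P. (\<Sum>k<n. c k * alpha k ^ s / poly P (alpha k)) = 0}"

definition is_parity_check :: "nat \<Rightarrow> nat \<Rightarrow> nat \<Rightarrow> (nat \<Rightarrow> nat \<Rightarrow> 'a::field) \<Rightarrow> (nat \<Rightarrow> 'a) set \<Rightarrow> bool" where
  "is_parity_check q m n H C \<longleftrightarrow> C = {c \<in> words q n. \<forall>r<m. (\<Sum>k<n. c k * H r k) = 0}"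

end

theory Submission
  imports Defs
begin

lemma ff_pow_card:
  fixes x :: "'a :: {field,finite}"
  shows "x ^ card (UNIV :: 'a set) = x"
proof (cases "x = 0")
  case False
  have "x * (\<Prod>y\<in>UNIV-{0}. x * y) = x * x ^ (card (UNIV :: 'a set) - 1) * \<Prod>(UNIV-{0})"
    by (simp add: prod.distrib mult_ac)
  also have "x * x ^ (card (UNIV :: 'a set) - 1) = x ^ Suc (card (UNIV :: 'a set) - 1)"
    by (subst power_Suc) auto
  also have "Suc (card (UNIV :: 'a set) - 1) = card (UNIV :: 'a set)"
    using finite_UNIV_card_ge_0[where ?'a = 'a] by simp
  also have "(\<Prod>y\<in>UNIV-{0}. x * y) = (\<Prod>y\<in>UNIV-{0}. y)"
    by (rule prod.reindex_bij_witness[of _ "\<lambda>y. y / x" "\<lambda>y. x * y"]) (use False in auto)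
  finally show ?thesis
    by simp
qed (use finite_UNIV_card_ge_0[where ?'a = 'a] in auto)

lemma pow_iter:
  fixes c :: "'a :: comm_semiring_1"
  assumes "c ^ q = c" shows "c ^ (q ^ l) = c"
proof (induction l)
  case (Suc l)
  have "c ^ (q ^ Suc l) = c ^ (q ^ l * q)" by (metis power_Suc2)
  also have "\<dots> = (c ^ (q ^ l)) ^ q" by (rule power_mult)
  finally have "c ^ (q ^ Suc l) = (c ^ (q ^ l)) ^ q" .
  then show ?case using Suc assms by simp
qed simp

lemma card_zero:
  "of_nat (card (UNIV :: 'a::{field,finite} set)) = (0::'a)"
proof -
  have "(\<Sum>x\<in>UNIV. x + 1) = (\<Sum>x\<in>(UNIV::'a set). x)"
    by (rule sum.reindex_bij_witness[of _ "\<lambda>y. y - 1" "\<lambda>y. y + 1"]) auto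
  then show ?thesis by (simp add: sum.distrib)
qed

lemma char_eq:
  fixes p m :: nat
  assumes "prime p" "card (UNIV :: 'a::{field,finite} set) = p ^ m"
  shows "CHAR('a) = p"
proof -
  have pos: "CHAR('a) > 0" by (rule finite_imp_CHAR_pos) simp
  have pr: "prime CHAR('a)" using prime_CHAR_semidom[OF pos] .
  have "CHAR('a) dvd p ^ m" using card_zero[where 'a='a] assms(2) of_nat_eq_0_iff_char_dvd by metis
  then have "CHAR('a) dvd p" using pr prime_dvd_power by blast
  then show ?thesis using pr assms(1) primes_dvd_imp_eq by blast
qed

theorem lemma4:
  fixes p e q l t i n :: nat and alpha :: "nat \<Rightarrow> 'a::{field,finite}"
  assumes "prime p" and "e \<ge> 1" and "q = p ^ e"
    and "l \<ge> 1" and "t = q ^ l"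
    and "card (UNIV :: 'a set) = t ^ 2"
    and "1 \<le> i" and "i < q - 1"
  defines "G1 \<equiv> monom (1::'a) (t - 1) + 1"
    and "G2 \<equiv> monom (1::'a) t + monom 1 1"
  assumes "bij_betw alpha {..<n} {a. a \<noteq> 0 \<and> poly G1 a \<noteq> 0}"
  defines "H \<equiv> (\<lambda>r k. if r = 0 then 1 / poly G2 (alpha k) ^ i
                       else alpha k ^ (r - 1) / poly G1 (alpha k) ^ i)"
  shows "is_parity_check q (i * (t - 1) + 1) n H (goppa_code q alpha n (G2 ^ i))
     \<and> goppa_code q alpha n (G2 ^ i) =
         {c \<in> goppa_code q alpha n (G1 ^ i). (\<Sum>k<n. c k / poly G2 (alpha k) ^ i) = 0}
     \<and> (\<forall>k<n. 1 / poly G2 (alpha k) ^ i \<in> subfield_GF t)"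
proof -
  have tpow: "t = p ^ (e * l)" unfolding assms(5,3) by (rule power_mult[symmetric])
  have CH: "CHAR('a) = p"
    by (rule char_eq[OF assms(1), of "2 * e * l"]) (simp add: assms(6) tpow flip: power_mult, simp add: ac_simps)
  have prCH: "prime CHAR('a)" using CH assms(1) by simp
  have frob_sum: "\<And>f (A::nat set). (\<Sum>k\<in>A. f k) ^ t = (\<Sum>k\<in>A. (f k :: 'a) ^ t)"
    using freshmans_dream_sum'[OF prCH] CH tpow by blast
  have q3: "q \<ge> 3" using assms(7,8) by linarith
  have tq: "t \<ge> q" using assms(4,5) q3
    by (metis One_nat_def Suc_le_eq le_trans less_imp_le_nat nat_power_less_imp_less not_less zero_less_Suc power_one_right power_increasing)
  have t3: "t \<ge> 3" using tq q3 by simp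
  have it: "i < t" using assms(8) tq by linarith
  have xtt: "\<And>x::'a. x ^ (t * t) = x" using ff_pow_card assms(6) by (metis power2_eq_square)
  have A: "\<And>k. k < n \<Longrightarrow> alpha k \<noteq> 0 \<and> poly G1 (alpha k) \<noteq> 0"
    using assms(11) unfolding bij_betw_def by auto
  have G2eq: "\<And>x. poly G2 x = x * poly G1 x"
    using t3 by (simp add: G1_def G2_def poly_monom algebra_simps flip: power_Suc)
  have G2fix: "\<And>x. poly G2 x ^ t = poly G2 x"
  proof -
    fix x :: 'a
    have "poly G2 x ^ t = (x ^ t) ^ t + x ^ t"
      using freshmans_dream'[OF prCH, of t "e*l" "x^t" x] CH tpow by (simp add: G2_def poly_monom)
    also have "\<dots> = poly G2 x" using xtt by (simp add: G2_def poly_monom flip: power_mult)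
    finally show "poly G2 x ^ t = poly G2 x" .
  qed
  have degG1: "degree G1 = t - 1"
    using t3 unfolding G1_def by (subst degree_add_eq_left) (auto simp: degree_monom_eq)
  have degG2: "degree G2 = t"
    using t3 unfolding G2_def by (subst degree_add_eq_left) (auto simp: degree_monom_eq)
  have G1nz: "G1 \<noteq> 0" using degG1 t3 by auto
  have G2nz: "G2 \<noteq> 0" using degG2 t3 by auto
  have d1: "degree (G1 ^ i) = i * (t - 1)" using degG1 G1nz by (simp add: degree_power_eq)
  have d2: "degree (G2 ^ i) = i * t" using degG2 G2nz by (simp add: degree_power_eq)
  define T where "T c s = (\<Sum>k<n. c k * alpha k ^ s / poly G1 (alpha k) ^ i)" for c s
  define S where "S c s = (\<Sum>k<n. c k * alpha k ^ s / poly G2 (alpha k) ^ i)" for c s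
  define U where "U c = (\<Sum>k<n. c k / poly G2 (alpha k) ^ i)" for c
  have key: "(\<forall>s<i*t. S c s = 0) \<longleftrightarrow> (U c = 0 \<and> (\<forall>s<i*(t-1). T c s = 0))"
    if c: "c \<in> words q n" for c
  proof -
    have ct: "c k ^ t = c k" if "k < n" for k
    proof -
      have "c k ^ q = c k" using c that unfolding words_def subfield_GF_def by auto
      then show ?thesis using pow_iter assms(5) by metis
    qed
    have ST: "S c (s' + i) = T c s'" for s'
      unfolding S_def T_def
    proof (rule sum.cong[OF refl])
      fix k assume "k \<in> {..<n}"
      then have a: "alpha k \<noteq> 0" "poly G1 (alpha k) \<noteq> 0" using A by auto
      show "c k * alpha k ^ (s' + i) / poly G2 (alpha k) ^ i = c k * alpha k ^ s' / poly G1 (alpha k) ^ i"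
        using a by (simp add: G2eq power_mult_distrib power_add)
    qed
    have SU: "S c 0 = U c" unfolding S_def U_def by simp
    have SF: "S c s ^ t = T c (s * t - i)" if s: "0 < s" "s < i" for s
      unfolding S_def T_def frob_sum
    proof (rule sum.cong[OF refl])
      fix k assume "k \<in> {..<n}"
      then have a: "alpha k \<noteq> 0" "poly G1 (alpha k) \<noteq> 0" and ck: "c k ^ t = c k" using A ct by auto
      have "t \<le> s * t" using s(1) by simp
      then have st: "s * t = (s * t - i) + i" using it by linarith
      have "(c k * alpha k ^ s / poly G2 (alpha k) ^ i) ^ t
            = c k ^ t * alpha k ^ (s * t) / (poly G2 (alpha k) ^ t) ^ i"
        by (simp add: power_divide power_mult_distrib flip: power_mult) (simp add: mult.commute power_mult)
      also have "\<dots> = c k * alpha k ^ ((s * t - i) + i) / (alpha k * poly G1 (alpha k)) ^ i"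
        by (subst G2fix, simp only: ck st[symmetric] G2eq)
      also have "\<dots> = c k * alpha k ^ (s * t - i) / poly G1 (alpha k) ^ i"
        using a by (simp add: power_mult_distrib power_add)
      finally show "(c k * alpha k ^ s / poly G2 (alpha k) ^ i) ^ t
          = c k * alpha k ^ (s * t - i) / poly G1 (alpha k) ^ i" .
    qed
    show ?thesis
    proof
      assume H: "\<forall>s<i*t. S c s = 0"
      have "0 < i * t" using assms(7) it by simp
      then have "U c = 0" using H SU by simp
      moreover have "\<forall>s<i*(t-1). T c s = 0"
      proof (intro allI impI)
        fix s assume "s < i*(t-1)"
        moreover have "i * (t - 1) + i = i * t" using it by (cases t) auto
        ultimately have "s + i < i * t" by linarith
        then have "S c (s + i) = 0" using H by blast
        then show "T c s = 0" using ST by simp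
      qed
      ultimately show "U c = 0 \<and> (\<forall>s<i*(t-1). T c s = 0)" by blast
    next
      assume H: "U c = 0 \<and> (\<forall>s<i*(t-1). T c s = 0)"
      show "\<forall>s<i*t. S c s = 0"
      proof (intro allI impI)
        fix s assume s: "s < i * t"
        consider "s = 0" | "0 < s" "s < i" | "i \<le> s" by linarith
        then show "S c s = 0"
        proof cases
          case 1 then show ?thesis using SU H by simp
        next
          case 2
          have "s \<le> i - 1" using 2 by linarith
          then have "s * t \<le> (i - 1) * t" by (rule mult_le_mono1)
          moreover have "(i - 1) * t + t = i * t" using 2 by (cases i) auto
          moreover have "i * (t - 1) + i = i * t" using it by (cases t) auto
          ultimately have "s * t - i < i * (t - 1)" using it by linarith
          then have "S c s ^ t = 0" using SF[OF 2] H by simp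
          then show ?thesis by simp
        next
          case 3
          then obtain s' where s': "s = s' + i" by (metis le_add_diff_inverse2)
          moreover have "i * (t - 1) + i = i * t" using it by (cases t) auto
          ultimately have "s' < i * (t - 1)" using s by linarith
          then show ?thesis using H ST s' by simp
        qed
      qed
    qed
  qed
  have E2: "goppa_code q alpha n (G2 ^ i) = {c \<in> words q n. U c = 0 \<and> (\<forall>s<i*(t-1). T c s = 0)}"
  proof -
    have "goppa_code q alpha n (G2 ^ i) = {c \<in> words q n. \<forall>s<i*t. S c s = 0}"
      unfolding goppa_code_def d2 S_def by (simp add: poly_power)
    then show ?thesis using key by auto
  qed
  have E1: "goppa_code q alpha n (G1 ^ i) = {c \<in> words q n. \<forall>s<i*(t-1). T c s = 0}"
    unfolding goppa_code_def d1 T_def by (auto simp: poly_power)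
  have P: "is_parity_check q (i * (t - 1) + 1) n H (goppa_code q alpha n (G2 ^ i))"
  proof -
    have split: "(\<forall>r<m+1. P r) \<longleftrightarrow> (P 0 \<and> (\<forall>s<m. P (Suc s)))" for m and P :: "nat \<Rightarrow> bool"
      by (auto simp: less_Suc_eq_0_disj)
    have h0: "(\<Sum>k<n. c k * H 0 k) = U c" for c unfolding H_def U_def by simp
    have hs: "(\<Sum>k<n. c k * H (Suc s) k) = T c s" for c s unfolding H_def T_def by simp
    show ?thesis unfolding is_parity_check_def E2 split h0 hs by blast
  qed
  have F: "\<forall>k<n. 1 / poly G2 (alpha k) ^ i \<in> subfield_GF t"
  proof -
    have pc: "\<And>x::'a. (x ^ i) ^ t = (x ^ t) ^ i" by (metis power_mult mult.commute)
    show ?thesis unfolding subfield_GF_def by (simp add: power_divide pc G2fix)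
  qed
  show ?thesis using P F E1 E2 U_def by auto
qed

end
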